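(* Let $V$ be a complex normed vector space, $x=\{x_n\}_{n=1}^\infty\in l^{\infty}(V)$ and $v\in V$. Then $x$ is strongly almost convergent to $v$ if and only if $$\lim_{n\rightarrow\infty}\frac{1}{n}\sum_{i=0}^{n-1}x_{i+j}=v$$ uniformly in $j\in\mathbb{N}$, i.e. $\sup_{j\in\mathbb{N}}\left\|\frac1n\sum_{i=0}^{n-1}x_{i+j}-v\right\|_V\to0$ as $n\to\infty$.
   Context: $\mathbb{N}=\{1,2,3,\dots\}$. $l^{\infty}(V)$ is the space of bounded sequences $x=\{x_n\}_{n=1}^\infty$ in $V$ with norm $\|x\|_\infty=\sup_n\|x_n\|_V$. For $v\in V$, $\widetilde v=\{v,v,\dots\}$. $T$ is the left shift: $T\{x_1,x_2,\dots\}=\{x_2,x_3,\dots\}$. A Banach limit functional is a bounded linear functional $L$ on $l^\infty(V)$ with $\|L\|\le1$ and $L(Tx)=L(x)$ for all $x$. A sequence $x\in l^\infty(V)$ is strongly almost convergent to $v\in V$ if $L(x)=L(\widetilde v)$ for every Banach limit functional $L$. *)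

theory Defs
  imports "HOL-Analysis.Analysis"
begin

text \<open>A complex normed vector space is modelled as a real normed vector space
  together with a real-linear operator J (multiplication by the imaginary unit)
  with J (J v) = - v, such that the induced complex scalar multiplication
  c v = Re c v + Im c J v is absolutely homogeneous for the norm.\<close>

definition cscale :: "('a::real_normed_vector \<Rightarrow> 'a) \<Rightarrow> complex \<Rightarrow> 'a \<Rightarrow> 'a" where
  "cscale J c v = Re c *\<^sub>R v + Im c *\<^sub>R J v"

definition complex_structure :: "('a::real_normed_vector \<Rightarrow> 'a) \<Rightarrow> bool" where
  "complex_structure J \<longleftrightarrow> linear J \<and> (\<forall>v. J (J v) = - v) \<and>
     (\<forall>c v. norm (cscale J c v) = cmod c * norm v)"

text \<open>l-infinity of V: bounded sequences (indexed from 0), with the sup norm.\<close>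

definition linf :: "(nat \<Rightarrow> 'a::real_normed_vector) set" where
  "linf = {x. bounded (range x)}"

definition linf_norm :: "(nat \<Rightarrow> 'a::real_normed_vector) \<Rightarrow> real" where
  "linf_norm x = (SUP n. norm (x n))"

definition banach_limit :: "('a::real_normed_vector \<Rightarrow> 'a) \<Rightarrow> ((nat \<Rightarrow> 'a) \<Rightarrow> complex) \<Rightarrow> bool" where
  "banach_limit J L \<longleftrightarrow>
     (\<forall>x\<in>linf. \<forall>y\<in>linf. L (\<lambda>n. x n + y n) = L x + L y) \<and>
     (\<forall>c. \<forall>x\<in>linf. L (\<lambda>n. cscale J c (x n)) = c * L x) \<and>
     (\<forall>x\<in>linf. cmod (L x) \<le> linf_norm x) \<and>
     (\<forall>x\<in>linf. L (\<lambda>n. x (Suc n)) = L x)"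

definition strongly_almost_convergent ::
  "('a::real_normed_vector \<Rightarrow> 'a) \<Rightarrow> (nat \<Rightarrow> 'a) \<Rightarrow> 'a \<Rightarrow> bool" where
  "strongly_almost_convergent J x v \<longleftrightarrow>
     (\<forall>L. banach_limit J L \<longrightarrow> L x = L (\<lambda>_. v))"

end

theory Submission
  imports Defs
begin


lemma hahn_banach_real:
  fixes p :: "'b::real_vector \<Rightarrow> real" and z :: 'b
  assumes padd: "\<And>a b. p (a + b) \<le> p a + p b"
    and phom: "\<And>c a. c \<ge> 0 \<Longrightarrow> p (c *\<^sub>R a) = c * p a"
  shows "\<exists>f. linear f \<and> (\<forall>a. f a \<le> p a) \<and> f z = p z"
proof -
  have p0: "p 0 = 0" using phom[of 0 0] by simp
  have pneg: "- p a \<le> p (- a)" for a using padd[of a "-a"] p0 by simp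
  define A where "A = {G :: ('b \<times> real) set. subspace G \<and> (\<forall>(a,r)\<in>G. r \<le> p a)
      \<and> (z, p z) \<in> G \<and> (\<forall>r. (0,r)\<in>G \<longrightarrow> r = 0)}"
  define G0 where "G0 = range (\<lambda>t. (t *\<^sub>R z, t * p z))"
  have G0A: "G0 \<in> A"
  proof -
    have sub: "subspace G0"
      unfolding subspace_def G0_def
    proof (intro conjI ballI allI)
      show "0 \<in> range (\<lambda>t. (t *\<^sub>R z, t * p z))" by (rule image_eqI[of _ _ 0]) (auto simp: zero_prod_def)
    next
      fix x y assume "x \<in> range (\<lambda>t. (t *\<^sub>R z, t * p z))" "y \<in> range (\<lambda>t. (t *\<^sub>R z, t * p z))"
      then obtain s t where "x = (s *\<^sub>R z, s * p z)" "y = (t *\<^sub>R z, t * p z)" by auto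
      then show "x + y \<in> range (\<lambda>t. (t *\<^sub>R z, t * p z))"
        by (intro image_eqI[of _ _ "s+t"]) (auto simp: scaleR_add_left algebra_simps)
    next
      fix c x assume "x \<in> range (\<lambda>t. (t *\<^sub>R z, t * p z))"
      then obtain s where "x = (s *\<^sub>R z, s * p z)" by auto
      then show "c *\<^sub>R x \<in> range (\<lambda>t. (t *\<^sub>R z, t * p z))"
        by (intro image_eqI[of _ _ "c * s"]) auto
    qed
    have bd: "t * p z \<le> p (t *\<^sub>R z)" for t
    proof (cases "t \<ge> 0")
      case True then show ?thesis using phom by simp
    next
      case False
      have "p (t *\<^sub>R z) = p ((-t) *\<^sub>R (- z))" by simp
      also have "\<dots> = (-t) * p (-z)" using False by (intro phom) simp
      moreover have "(-t) * (- p z) \<le> (-t) * p (-z)" using pneg[of z] False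
        by (intro mult_left_mono) auto
      ultimately show ?thesis by simp
    qed
    have "(z, p z) \<in> G0" unfolding G0_def by (rule image_eqI[of _ _ 1]) auto
    moreover have "r = 0" if "(0, r) \<in> G0" for r
    proof -
      from that obtain t where "t *\<^sub>R z = 0" "r = t * p z" unfolding G0_def by auto
      then show ?thesis using p0 by auto
    qed
    ultimately show ?thesis using sub bd unfolding A_def G0_def by auto
  qed
  have "\<exists>M\<in>A. \<forall>X\<in>A. M \<subseteq> X \<longrightarrow> X = M"
  proof (rule Zorn_Lemma2, intro ballI)
    fix C assume C: "C \<in> chains A"
    show "\<exists>U\<in>A. \<forall>X\<in>C. X \<subseteq> U"
    proof (cases "C = {}")
      case True then show ?thesis using G0A by auto
    next
      case False
      have CA: "C \<subseteq> A" using chainsD2[OF C] .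
      have "subspace (\<Union>C)"
        unfolding subspace_def
      proof (intro conjI ballI allI)
        from False obtain X where "X \<in> C" by auto
        then show "0 \<in> \<Union>C" using CA unfolding A_def subspace_def by blast
      next
        fix x y assume "x \<in> \<Union>C" "y \<in> \<Union>C"
        then obtain X Y where XY: "X \<in> C" "Y \<in> C" "x \<in> X" "y \<in> Y" by auto
        from chainsD[OF C XY(1,2)] have "x \<in> X \<union> Y \<and> y \<in> X \<union> Y \<and> (X \<union> Y = X \<or> X \<union> Y = Y)"
          using XY by auto
        then have "\<exists>Z\<in>C. x \<in> Z \<and> y \<in> Z" using XY by auto
        then obtain Z where "Z \<in> C" "x \<in> Z" "y \<in> Z" by blast
        then show "x + y \<in> \<Union>C" using CA unfolding A_def subspace_def by blast
      next
        fix c x assume "x \<in> \<Union>C"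
        then obtain X where "X \<in> C" "x \<in> X" by auto
        then show "c *\<^sub>R x \<in> \<Union>C" using CA unfolding A_def subspace_def by blast
      qed
      moreover have "(z, p z) \<in> \<Union>C" using False CA unfolding A_def by blast
      moreover have "\<forall>(a,r)\<in>\<Union>C. r \<le> p a" using CA unfolding A_def by blast
      moreover have "\<forall>r. (0,r)\<in>\<Union>C \<longrightarrow> r = 0" using CA unfolding A_def by blast
      ultimately have "\<Union>C \<in> A" unfolding A_def by blast
      then show ?thesis by blast
    qed
  qed
  then obtain M where MA: "M \<in> A" and Mmax: "\<And>X. X \<in> A \<Longrightarrow> M \<subseteq> X \<Longrightarrow> X = M" by blast
  have Msub: "subspace M" and Mle: "\<And>a r. (a,r) \<in> M \<Longrightarrow> r \<le> p a"
    and Mz: "(z, p z) \<in> M" and M0: "\<And>r. (0,r) \<in> M \<Longrightarrow> r = 0"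
    using MA unfolding A_def by auto
  have Madd: "(a + b, r + s) \<in> M" if "(a,r) \<in> M" "(b,s) \<in> M" for a b r s
    using Msub that unfolding subspace_def by (metis add_Pair)
  have Mscale: "(c *\<^sub>R a, c * r) \<in> M" if "(a,r) \<in> M" for a r c
    using Msub that unfolding subspace_def by (metis scaleR_Pair real_scaleR_def)
  have Muniq: "r = s" if "(a,r) \<in> M" "(a,s) \<in> M" for a r s
  proof -
    have "(a + (-1) *\<^sub>R a, r + (-1) * s) \<in> M" using Madd[OF that(1) Mscale[OF that(2)]] .
    then show ?thesis using M0 by fastforce
  qed
  have total: "\<exists>r. (w, r) \<in> M" for w
  proof (rule ccontr)
    assume nw: "\<nexists>r. (w, r) \<in> M"
    define S where "S = {r - p (a - w) | a r. (a,r) \<in> M}"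
    define c where "c = Sup S"
    have key: "r - p (a - w) \<le> p (b + w) - s" if "(a,r) \<in> M" "(b,s) \<in> M" for a r b s
    proof -
      have "r + s \<le> p (a + b)" using Mle[OF Madd[OF that]] .
      also have "\<dots> = p ((a - w) + (b + w))" by simp
      also have "\<dots> \<le> p (a - w) + p (b + w)" by (rule padd)
      finally show ?thesis by simp
    qed
    have M00: "(0, 0) \<in> M" using Msub unfolding subspace_def by (simp add: zero_prod_def)
    have Sne: "S \<noteq> {}" using M00 unfolding S_def by blast
    have Sbd: "bdd_above S" unfolding S_def bdd_above_def using key[OF _ M00] by fastforce
    have cup: "r - p (a - w) \<le> c" if "(a,r) \<in> M" for a r
      unfolding c_def using that Sbd by (intro cSup_upper) (auto simp: S_def)
    have clow: "c \<le> p (b + w) - s" if "(b,s) \<in> M" for b s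
      unfolding c_def using Sne by (intro cSup_least) (auto simp: S_def intro: key[OF _ that])
    define M' where "M' = {(a + t *\<^sub>R w, r + t * c) | a r t. (a,r) \<in> M}"
    have MM': "M \<subseteq> M'" unfolding M'_def by force
    have wM': "(w, c) \<in> M'" unfolding M'_def using M00 by force
    have M'A: "M' \<in> A"
    proof -
      have "subspace M'"
        unfolding subspace_def
      proof (intro conjI ballI allI)
        show "0 \<in> M'" using MM' M00 by (auto simp: zero_prod_def)
      next
        fix x y assume "x \<in> M'" "y \<in> M'"
        then obtain a r t b s u where "x = (a + t *\<^sub>R w, r + t * c)" "(a,r) \<in> M"
            "y = (b + u *\<^sub>R w, s + u * c)" "(b,s) \<in> M" unfolding M'_def by blast
        then show "x + y \<in> M'" unfolding M'_def
          by (intro CollectI exI[of _ "a+b"] exI[of _ "r+s"] exI[of _ "t+u"])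
             (auto intro: Madd simp: algebra_simps scaleR_add_left)
      next
        fix k x assume "x \<in> M'"
        then obtain a r t where "x = (a + t *\<^sub>R w, r + t * c)" "(a,r) \<in> M" unfolding M'_def by blast
        then show "k *\<^sub>R x \<in> M'" unfolding M'_def
          by (intro CollectI exI[of _ "k *\<^sub>R a"] exI[of _ "k*r"] exI[of _ "k*t"])
             (auto intro: Mscale simp: algebra_simps scaleR_add_right)
      qed
      moreover have "r' \<le> p a'" if "(a', r') \<in> M'" for a' r'
      proof -
        from that obtain a r t where e: "a' = a + t *\<^sub>R w" "r' = r + t * c" and ar: "(a,r) \<in> M"
          unfolding M'_def by blast
        consider "t > 0" | "t = 0" | "t < 0" by linarith
        then show ?thesis
        proof cases
          case 1
          have "c \<le> p ((1/t) *\<^sub>R a + w) - (1/t) * r" using clow[OF Mscale[OF ar]] .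
          then have "t * c \<le> t * (p ((1/t) *\<^sub>R a + w) - (1/t) * r)" using 1
            by (intro mult_left_mono) auto
          then have "t * c \<le> t * p ((1/t) *\<^sub>R a + w) - r" using 1
            by (simp add: right_diff_distrib)
          also have "t * p ((1/t) *\<^sub>R a + w) = p (t *\<^sub>R ((1/t) *\<^sub>R a + w))" using 1 by (simp add: phom)
          also have "t *\<^sub>R ((1/t) *\<^sub>R a + w) = a + t *\<^sub>R w" using 1 by (simp add: scaleR_add_right)
          finally show ?thesis using e by simp
        next
          case 2 then show ?thesis using e Mle[OF ar] by simp
        next
          case 3
          define u where "u = - t"
          have u: "u > 0" using 3 u_def by simp
          have "(1/u) * r - p ((1/u) *\<^sub>R a - w) \<le> c" using cup[OF Mscale[OF ar]] .
          then have "u * ((1/u) * r - p ((1/u) *\<^sub>R a - w)) \<le> u * c" using u by (simp add: mult_left_mono)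
          then have "r - u * p ((1/u) *\<^sub>R a - w) \<le> u * c" using u by (simp add: right_diff_distrib)
          also have "u * p ((1/u) *\<^sub>R a - w) = p (u *\<^sub>R ((1/u) *\<^sub>R a - w))" using u by (simp add: phom)
          also have "u *\<^sub>R ((1/u) *\<^sub>R a - w) = a + t *\<^sub>R w" using u u_def by (simp add: scaleR_diff_right)
          finally show ?thesis using e u_def by simp
        qed
      qed
      moreover have "(z, p z) \<in> M'" using MM' Mz by blast
      moreover have "r' = 0" if "(0, r') \<in> M'" for r'
      proof -
        from that obtain a r t where e: "0 = a + t *\<^sub>R w" "r' = r + t * c" and ar: "(a,r) \<in> M"
          unfolding M'_def by blast
        show ?thesis
        proof (cases "t = 0")
          case True then show ?thesis using e M0 ar by simp
        next
          case False
          have "((-1/t) *\<^sub>R a, (-1/t) * r) \<in> M" using Mscale[OF ar] .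
          moreover have "(-1/t) *\<^sub>R a = w"
          proof -
            have "a = - (t *\<^sub>R w)" using e[symmetric] by (simp add: add_eq_0_iff2)
            then show ?thesis using False by simp
          qed
          ultimately show ?thesis using nw by blast
        qed
      qed
      ultimately show ?thesis unfolding A_def by blast
    qed
    have "M' = M" using Mmax[OF M'A MM'] .
    then show False using wM' nw by blast
  qed
  define f where "f a = (SOME r. (a, r) \<in> M)" for a
  have fM: "(a, f a) \<in> M" for a unfolding f_def using total[of a] by (metis someI_ex)
  have "linear f"
  proof (rule linearI)
    fix a b show "f (a + b) = f a + f b" using Muniq[OF fM Madd[OF fM fM]] .
  next
    fix c a show "f (c *\<^sub>R a) = c *\<^sub>R f a" using Muniq[OF fM Mscale[OF fM]] by simp
  qed
  moreover have "\<forall>a. f a \<le> p a" using Mle[OF fM] by blast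
  moreover have "f z = p z" using Muniq[OF fM Mz] .
  ultimately show ?thesis by blast
qed



lemma linf_iff: "y \<in> linf \<longleftrightarrow> (\<exists>B. \<forall>n. norm (y n) \<le> B)"
  unfolding linf_def bounded_iff by auto

lemma linfI: "(\<And>n. norm (y n) \<le> B) \<Longrightarrow> y \<in> linf"
  unfolding linf_iff by blast

lemma linf_bdd: "y \<in> linf \<Longrightarrow> bdd_above (range (\<lambda>n. norm (y n)))"
  unfolding linf_iff bdd_above_def by auto

lemma linf_norm_ge: "y \<in> linf \<Longrightarrow> norm (y n) \<le> linf_norm y"
  unfolding linf_norm_def by (rule cSUP_upper[OF _ linf_bdd]) auto

lemma linf_norm_nonneg: "y \<in> linf \<Longrightarrow> 0 \<le> linf_norm y"
  using linf_norm_ge[of y 0] by (meson norm_ge_zero order_trans)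

lemma linf_norm_le: "(\<And>n. norm (y n) \<le> B) \<Longrightarrow> linf_norm y \<le> B"
  unfolding linf_norm_def by (rule cSUP_least) auto

lemma linf_add: "x \<in> linf \<Longrightarrow> y \<in> linf \<Longrightarrow> (\<lambda>n. x n + y n) \<in> linf"
proof -
  assume "x \<in> linf" "y \<in> linf"
  then obtain A B where bx: "\<And>n. norm (x n) \<le> A" and hy: "\<And>n. norm (y n) \<le> B" unfolding linf_iff by blast
  have "norm (x n + y n) \<le> A + B" for n
    using norm_triangle_ineq[of "x n" "y n"] bx[of n] hy[of n] by linarith
  then show ?thesis by (rule linfI)
qed

lemma linf_uminus: "x \<in> linf \<Longrightarrow> (\<lambda>n. - x n) \<in> linf"
  unfolding linf_iff by simp

lemma linf_diff: "x \<in> linf \<Longrightarrow> y \<in> linf \<Longrightarrow> (\<lambda>n. x n - y n) \<in> linf"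
  using linf_add[of x "\<lambda>n. - y n"] linf_uminus[of y] by simp

lemma linf_scaleR: "x \<in> linf \<Longrightarrow> (\<lambda>n. c *\<^sub>R x n) \<in> linf"
proof -
  assume "x \<in> linf"
  then obtain B where "\<And>n. norm (x n) \<le> B" unfolding linf_iff by blast
  then have "norm (c *\<^sub>R x n) \<le> \<bar>c\<bar> * B" for n by (simp add: mult_left_mono)
  then show ?thesis by (rule linfI)
qed

lemma linf_const: "(\<lambda>n. v) \<in> linf"
  unfolding linf_iff by auto

lemma linf_shift: "x \<in> linf \<Longrightarrow> (\<lambda>n. x (n + k)) \<in> linf"
  unfolding linf_iff by auto

lemma linf_sum: "(\<And>i. i \<in> I \<Longrightarrow> x i \<in> linf) \<Longrightarrow> (\<lambda>n. \<Sum>i\<in>I. x i n) \<in> linf"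
proof (induction I rule: infinite_finite_induct)
  case (insert a F) then show ?case by (simp add: linf_add)
qed (simp_all add: linf_const)

lemma linf_bcontfun: "y \<in> linf \<Longrightarrow> y \<in> bcontfun"
  unfolding linf_def bcontfun_def by simp

lemma BC_add: "x \<in> linf \<Longrightarrow> y \<in> linf \<Longrightarrow> Bcontfun (\<lambda>n. x n + y n) = Bcontfun x + Bcontfun y"
  by (rule bcontfun_eqI) (simp add: plus_bcontfun.rep_eq Bcontfun_inverse linf_bcontfun linf_add)

lemma BC_diff: "x \<in> linf \<Longrightarrow> y \<in> linf \<Longrightarrow> Bcontfun (\<lambda>n. x n - y n) = Bcontfun x - Bcontfun y"
  by (rule bcontfun_eqI) (simp add: minus_bcontfun.rep_eq Bcontfun_inverse linf_bcontfun linf_diff)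

lemma BC_scaleR: "x \<in> linf \<Longrightarrow> Bcontfun (\<lambda>n. c *\<^sub>R x n) = c *\<^sub>R Bcontfun x"
  by (rule bcontfun_eqI) (simp add: scaleR_bcontfun.rep_eq Bcontfun_inverse linf_bcontfun linf_scaleR)

lemma BC_inv: "x \<in> linf \<Longrightarrow> apply_bcontfun (Bcontfun x) = x"
  by (simp add: Bcontfun_inverse linf_bcontfun)

definition avg :: "(nat \<Rightarrow> 'a::real_normed_vector) \<Rightarrow> nat \<Rightarrow> nat \<Rightarrow> 'a" where
  "avg y n j = (1 / real n) *\<^sub>R (\<Sum>i<n. y (i + j))"

lemma norm_avg_le:
  assumes "\<And>k. norm (y k) \<le> B" "0 \<le> B"
  shows "norm (avg y n j) \<le> B"
proof (cases "n = 0")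
  case True then show ?thesis using assms by (simp add: avg_def)
next
  case False
  have "norm (\<Sum>i<n. y (i + j)) \<le> (\<Sum>i<n. norm (y (i + j)))" by (rule norm_sum)
  also have "\<dots> \<le> (\<Sum>i<n. B)" by (intro sum_mono assms)
  also have "\<dots> = real n * B" by simp
  finally show ?thesis using False
    by (simp add: avg_def field_simps)
qed

lemma avg_linf_norm: "y \<in> linf \<Longrightarrow> norm (avg y n j) \<le> linf_norm y"
  by (intro norm_avg_le linf_norm_ge linf_norm_nonneg)

definition AA :: "(nat \<Rightarrow> 'a::real_normed_vector) \<Rightarrow> nat \<Rightarrow> real" where
  "AA y n = (SUP j. norm (avg y n j))"

lemma AA_bdd: "y \<in> linf \<Longrightarrow> bdd_above (range (\<lambda>j. norm (avg y n j)))"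
  using avg_linf_norm unfolding bdd_above_def by blast

lemma AA_ge: "y \<in> linf \<Longrightarrow> norm (avg y n j) \<le> AA y n"
  unfolding AA_def by (rule cSUP_upper[OF _ AA_bdd]) auto

lemma AA_nonneg: "y \<in> linf \<Longrightarrow> 0 \<le> AA y n"
  using AA_ge[of y n 0] by (meson norm_ge_zero order_trans)

lemma AA_le: "(\<And>j. norm (avg y n j) \<le> B) \<Longrightarrow> AA y n \<le> B"
  unfolding AA_def by (rule cSUP_least) auto

lemma AA_linf_norm: "y \<in> linf \<Longrightarrow> AA y n \<le> linf_norm y"
  by (intro AA_le avg_linf_norm)

lemma avg_add: "avg (\<lambda>k. x k + y k) n j = avg x n j + avg y n j"
  by (simp add: avg_def sum.distrib scaleR_add_right)

lemma avg_scaleR: "avg (\<lambda>k. c *\<^sub>R x k) n j = c *\<^sub>R avg x n j"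
  by (simp add: avg_def scaleR_sum_right[symmetric])

lemma AA_add:
  assumes x: "x \<in> linf" and y: "y \<in> linf"
  shows "AA (\<lambda>k. x k + y k) n \<le> AA x n + AA y n"
proof (rule AA_le)
  fix j
  have "norm (avg (\<lambda>k. x k + y k) n j) \<le> norm (avg x n j) + norm (avg y n j)"
    unfolding avg_add by (rule norm_triangle_ineq)
  also have "\<dots> \<le> AA x n + AA y n" using AA_ge x y by (intro add_mono) auto
  finally show "norm (avg (\<lambda>k. x k + y k) n j) \<le> AA x n + AA y n" .
qed

lemma AA_scaleR_le: "x \<in> linf \<Longrightarrow> AA (\<lambda>k. c *\<^sub>R x k) n \<le> \<bar>c\<bar> * AA x n"
  by (rule AA_le) (simp add: avg_scaleR AA_ge mult_left_mono)

lemma AA_scaleR: "x \<in> linf \<Longrightarrow> AA (\<lambda>k. c *\<^sub>R x k) n = \<bar>c\<bar> * AA x n"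
proof (cases "c = 0")
  case True then show ?thesis by (simp add: AA_def avg_def)
next
  case False
  assume x: "x \<in> linf"
  have "AA x n = AA (\<lambda>k. (1/c) *\<^sub>R (c *\<^sub>R x k)) n" using False by simp
  also have "\<dots> \<le> \<bar>1/c\<bar> * AA (\<lambda>k. c *\<^sub>R x k) n" by (intro AA_scaleR_le linf_scaleR x)
  finally have "\<bar>c\<bar> * AA x n \<le> AA (\<lambda>k. c *\<^sub>R x k) n" using False
    by (simp add: field_simps)
  then show ?thesis using AA_scaleR_le[OF x, of c n] by linarith
qed



lemma ls_real:
  fixes u :: "nat \<Rightarrow> real"
  assumes "\<And>n. 0 \<le> u n" "\<And>n. u n \<le> K"
  shows "limsup (\<lambda>n. ereal (u n)) = ereal (real_of_ereal (limsup (\<lambda>n. ereal (u n))))"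
    "0 \<le> real_of_ereal (limsup (\<lambda>n. ereal (u n)))"
    "real_of_ereal (limsup (\<lambda>n. ereal (u n))) \<le> K"
proof -
  define l where "l = limsup (\<lambda>n. ereal (u n))"
  have "0 \<le> liminf (\<lambda>n. ereal (u n))" by (rule Liminf_bounded) (simp add: assms)
  also have "\<dots> \<le> l" unfolding l_def by (rule Liminf_le_Limsup) simp
  finally have l0: "0 \<le> l" .
  have lK: "l \<le> ereal K" unfolding l_def by (rule Limsup_bounded) (simp add: assms)
  from l0 lK obtain r where r: "l = ereal r" by (cases l) auto
  show "limsup (\<lambda>n. ereal (u n)) = ereal (real_of_ereal (limsup (\<lambda>n. ereal (u n))))"
    using r l_def by simp
  show "0 \<le> real_of_ereal (limsup (\<lambda>n. ereal (u n)))" using r l0 l_def by simp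
  show "real_of_ereal (limsup (\<lambda>n. ereal (u n))) \<le> K" using r lK l_def by simp
qed

definition qq :: "(nat \<Rightarrow> 'a::real_normed_vector) \<Rightarrow> real" where
  "qq y = real_of_ereal (limsup (\<lambda>n. ereal (AA y n)))"

lemma qq_props:
  assumes "y \<in> linf"
  shows "limsup (\<lambda>n. ereal (AA y n)) = ereal (qq y)" "0 \<le> qq y" "qq y \<le> linf_norm y"
  using ls_real[of "AA y" "linf_norm y", OF AA_nonneg[OF assms] AA_linf_norm[OF assms]]
  unfolding qq_def by auto

lemma qq_add:
  assumes x: "x \<in> linf" and y: "y \<in> linf"
  shows "qq (\<lambda>k. x k + y k) \<le> qq x + qq y"
proof -
  have "ereal (qq (\<lambda>k. x k + y k)) = limsup (\<lambda>n. ereal (AA (\<lambda>k. x k + y k) n))"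
    using qq_props(1)[OF linf_add[OF x y]] by simp
  also have "\<dots> \<le> limsup (\<lambda>n. ereal (AA x n) + ereal (AA y n))"
    by (rule Limsup_mono) (simp add: AA_add[OF x y])
  also have "\<dots> \<le> limsup (\<lambda>n. ereal (AA x n)) + limsup (\<lambda>n. ereal (AA y n))"
    by (rule ereal_limsup_add_mono)
  also have "\<dots> = ereal (qq x + qq y)" using qq_props(1)[OF x] qq_props(1)[OF y] by simp
  finally show ?thesis by simp
qed

lemma qq_scaleR:
  assumes x: "x \<in> linf"
  shows "qq (\<lambda>k. c *\<^sub>R x k) = \<bar>c\<bar> * qq x"
proof -
  have "ereal (qq (\<lambda>k. c *\<^sub>R x k)) = limsup (\<lambda>n. ereal (AA (\<lambda>k. c *\<^sub>R x k) n))"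
    using qq_props(1)[OF linf_scaleR[OF x]] by simp
  also have "\<dots> = limsup (\<lambda>n. ereal \<bar>c\<bar> * ereal (AA x n))"
    by (simp add: AA_scaleR[OF x])
  also have "\<dots> = ereal \<bar>c\<bar> * limsup (\<lambda>n. ereal (AA x n))"
    by (rule Limsup_ereal_mult_left) simp_all
  also have "\<dots> = ereal (\<bar>c\<bar> * qq x)" using qq_props(1)[OF x] by simp
  finally show ?thesis by simp
qed

lemma qq_cong: "(\<And>n. AA y n = AA z n) \<Longrightarrow> qq y = qq z"
  unfolding qq_def by simp

lemma avg_shift: "avg (\<lambda>k. y (Suc k) - y k) n j = (1 / real n) *\<^sub>R (y (n + j) - y j)"
proof -
  have "(\<Sum>i<n. y (Suc i + j) - y (i + j)) = y (n + j) - y (0 + j)"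
    using sum_lessThan_telescope[of "\<lambda>i. y (i + j)" n] by simp
  then show ?thesis by (simp add: avg_def)
qed

lemma qq_shift:
  assumes y: "y \<in> linf"
  shows "qq (\<lambda>k. y (Suc k) - y k) \<le> 0"
proof -
  define B where "B = linf_norm y"
  have AAle: "AA (\<lambda>k. y (Suc k) - y k) n \<le> 2 * B / real n" for n
  proof (rule AA_le)
    fix j
    have "norm (y (n + j) - y j) \<le> norm (y (n + j)) + norm (y j)" by (rule norm_triangle_ineq4)
    also have "\<dots> \<le> 2 * B" using linf_norm_ge[OF y, of "n + j"] linf_norm_ge[OF y, of j] B_def by linarith
    finally have "norm (y (n + j) - y j) \<le> 2 * B" .
    then have "(1 / real n) * norm (y (n + j) - y j) \<le> (1 / real n) * (2 * B)"
      by (intro mult_left_mono) auto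
    then show "norm (avg (\<lambda>k. y (Suc k) - y k) n j) \<le> 2 * B / real n"
      by (simp add: avg_shift)
  qed
  have lim: "(\<lambda>n. ereal (2 * B / real n)) \<longlonglongrightarrow> ereal 0"
    unfolding lim_ereal by (rule lim_const_over_n)
  have "ereal (qq (\<lambda>k. y (Suc k) - y k)) = limsup (\<lambda>n. ereal (AA (\<lambda>k. y (Suc k) - y k) n))"
    using qq_props(1)[OF linf_diff[OF linf_shift[of y 1] y]] y by simp
  also have "\<dots> \<le> limsup (\<lambda>n. ereal (2 * B / real n))"
    by (rule Limsup_mono) (simp add: AAle)
  also have "\<dots> = ereal 0" by (rule lim_imp_Limsup[OF _ lim]) simp
  finally show ?thesis by simp
qed

lemma qq_zero:
  assumes y: "y \<in> linf" and q: "qq y \<le> 0"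
  shows "(\<lambda>n. AA y n) \<longlonglongrightarrow> 0"
proof -
  have l: "limsup (\<lambda>n. ereal (AA y n)) = ereal 0"
    using qq_props[OF y] q by simp
  have "ereal 0 \<le> liminf (\<lambda>n. ereal (AA y n))"
    by (rule Liminf_bounded) (simp add: AA_nonneg[OF y])
  moreover have "liminf (\<lambda>n. ereal (AA y n)) \<le> limsup (\<lambda>n. ereal (AA y n))"
    by (rule Liminf_le_Limsup) simp
  ultimately have "liminf (\<lambda>n. ereal (AA y n)) = ereal 0" using l by simp
  then have "(\<lambda>n. ereal (AA y n)) \<longlonglongrightarrow> ereal 0"
    by (intro Liminf_eq_Limsup l) simp_all
  then show ?thesis by simp
qed



lemma cs_facts:
  assumes "complex_structure J"
  shows "linear J" "J (J v) = - v" "norm (cscale J c v) = cmod c * norm v"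
  using assms unfolding complex_structure_def by auto

lemma cscale_real: "cscale J (complex_of_real r) v = r *\<^sub>R v"
  by (simp add: cscale_def)

lemma cscale_i: "cscale J \<i> v = J v"
  by (simp add: cscale_def)

lemma norm_J: "complex_structure J \<Longrightarrow> norm (J v) = norm v"
  using cs_facts(3)[of J \<i> v] by (simp add: cscale_i)

lemma cscale_add: "linear J \<Longrightarrow> cscale J c (a + b) = cscale J c a + cscale J c b"
  by (simp add: cscale_def linear_add scaleR_add_right)

lemma cscale_zero: "linear J \<Longrightarrow> cscale J c 0 = 0"
  by (simp add: cscale_def linear_0)

lemma cscale_scaleR: "linear J \<Longrightarrow> cscale J c (r *\<^sub>R a) = r *\<^sub>R cscale J c a"
  by (simp add: cscale_def linear_scale scaleR_add_right mult.commute)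

lemma cscale_sum: "linear J \<Longrightarrow> cscale J c (\<Sum>i\<in>S. g i) = (\<Sum>i\<in>S. cscale J c (g i))"
  by (induction S rule: infinite_finite_induct) (simp_all add: cscale_add cscale_zero)

lemma linf_cscale:
  assumes "complex_structure J" "y \<in> linf"
  shows "(\<lambda>k. cscale J c (y k)) \<in> linf"
proof -
  have "(\<lambda>k. (cmod c) *\<^sub>R y k) \<in> linf" by (rule linf_scaleR[OF assms(2)])
  then obtain B where "\<And>k. norm ((cmod c) *\<^sub>R y k) \<le> B" unfolding linf_iff by blast
  then show ?thesis using cs_facts(3)[OF assms(1)] by (intro linfI[of _ B]) simp
qed

lemma linf_J: "complex_structure J \<Longrightarrow> y \<in> linf \<Longrightarrow> (\<lambda>k. J (y k)) \<in> linf"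
  using linf_cscale[of J y \<i>] by (simp add: cscale_i)

lemma qq_cscale:
  assumes J: "complex_structure J" and y: "y \<in> linf"
  shows "qq (\<lambda>k. cscale J c (y k)) = cmod c * qq y"
proof -
  have "avg (\<lambda>k. cscale J c (y k)) n j = cscale J c (avg y n j)" for n j
    using cs_facts(1)[OF J] by (simp add: avg_def cscale_scaleR cscale_sum)
  then have "norm (avg (\<lambda>k. cscale J c (y k)) n j) = norm (avg (\<lambda>k. (cmod c) *\<^sub>R y k) n j)" for n j
    by (simp add: cs_facts(3)[OF J] avg_scaleR)
  then have "qq (\<lambda>k. cscale J c (y k)) = qq (\<lambda>k. (cmod c) *\<^sub>R y k)"
    by (intro qq_cong) (simp add: AA_def)
  then show ?thesis using qq_scaleR[OF y] by simp
qed



lemma avg_const_diff: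
  assumes "n > 0"
  shows "avg (\<lambda>k. x k - v) n j = avg x n j - v"
proof -
  have "avg (\<lambda>k. x k - v) n j = avg x n j - (1 / real n) *\<^sub>R (real n *\<^sub>R v)"
    by (simp add: avg_def sum_subtractf scaleR_diff_right sum_constant_scaleR)
  also have "(1 / real n) *\<^sub>R (real n *\<^sub>R v) = v" using assms by simp
  finally show ?thesis .
qed

lemma unif_iff_AA:
  "uniform_limit UNIV (\<lambda>n j. avg x n j) (\<lambda>j. v) sequentially \<longleftrightarrow>
   (\<lambda>n. AA (\<lambda>k. x k - v) n) \<longlonglongrightarrow> 0"
  if x: "x \<in> linf"
proof
  have dl: "(\<lambda>k. x k - v) \<in> linf" by (intro linf_diff x linf_const)
  assume u: "uniform_limit UNIV (\<lambda>n j. avg x n j) (\<lambda>j. v) sequentially"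
  show "(\<lambda>n. AA (\<lambda>k. x k - v) n) \<longlonglongrightarrow> 0"
  proof (rule LIMSEQ_I)
    fix e :: real assume e: "e > 0"
    have all: "\<forall>e>0. \<forall>\<^sub>F n in sequentially. \<forall>j\<in>UNIV. dist (avg x n j) v < e"
      using u unfolding uniform_limit_iff .
    have "e / 2 > 0" using e by simp
    with all have "\<forall>\<^sub>F n in sequentially. \<forall>j\<in>UNIV. dist (avg x n j) v < e / 2" by blast
    moreover have "\<forall>\<^sub>F n in sequentially. n > 0" by (rule eventually_gt_at_top)
    ultimately have "\<forall>\<^sub>F n in sequentially. norm (AA (\<lambda>k. x k - v) n) < e"
    proof eventually_elim
      case (elim n)
      have "AA (\<lambda>k. x k - v) n \<le> e / 2"
        by (rule AA_le) (use elim in \<open>auto simp: avg_const_diff dist_norm less_imp_le\<close>)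
      then show ?case using AA_nonneg[OF dl, of n] e by simp
    qed
    then show "\<exists>no. \<forall>n\<ge>no. norm (AA (\<lambda>k. x k - v) n - 0) < e"
      unfolding eventually_sequentially by simp
  qed
next
  have dl: "(\<lambda>k. x k - v) \<in> linf" by (intro linf_diff x linf_const)
  assume a: "(\<lambda>n. AA (\<lambda>k. x k - v) n) \<longlonglongrightarrow> 0"
  show "uniform_limit UNIV (\<lambda>n j. avg x n j) (\<lambda>j. v) sequentially"
    unfolding uniform_limit_iff
  proof (intro allI impI)
    fix e :: real assume e: "e > 0"
    have "\<forall>\<^sub>F n in sequentially. dist (AA (\<lambda>k. x k - v) n) 0 < e"
      using a e by (rule tendstoD)
    moreover have "\<forall>\<^sub>F n in sequentially. n > 0" by (rule eventually_gt_at_top)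
    ultimately show "\<forall>\<^sub>F n in sequentially. \<forall>j\<in>UNIV. dist (avg x n j) v < e"
    proof eventually_elim
      case (elim n)
      show ?case
      proof
        fix j
        have "dist (avg x n j) v = norm (avg (\<lambda>k. x k - v) n j)"
          using elim by (simp add: avg_const_diff dist_norm)
        also have "\<dots> \<le> AA (\<lambda>k. x k - v) n" by (rule AA_ge[OF dl])
        finally show "dist (avg x n j) v < e" using elim AA_nonneg[OF dl, of n] by simp
      qed
    qed
  qed
qed



lemma linf_shift': "x \<in> linf \<Longrightarrow> (\<lambda>n. x (k + n)) \<in> linf"
  unfolding linf_iff by auto

lemma bl_facts:
  assumes "banach_limit J L"
  shows "\<And>x y. x \<in> linf \<Longrightarrow> y \<in> linf \<Longrightarrow> L (\<lambda>n. x n + y n) = L x + L y"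
    "\<And>c x. x \<in> linf \<Longrightarrow> L (\<lambda>n. cscale J c (x n)) = c * L x"
    "\<And>x. x \<in> linf \<Longrightarrow> cmod (L x) \<le> linf_norm x"
    "\<And>x. x \<in> linf \<Longrightarrow> L (\<lambda>n. x (Suc n)) = L x"
  using assms unfolding banach_limit_def by auto

lemma dir_easy:
  assumes J: "complex_structure J" and x: "x \<in> linf" and L: "banach_limit J L"
    and a: "(\<lambda>n. AA (\<lambda>k. x k - v) n) \<longlonglongrightarrow> 0"
  shows "L x = L (\<lambda>_. v)"
proof -
  define d where "d = (\<lambda>k. x k - v)"
  have dl: "d \<in> linf" unfolding d_def by (intro linf_diff x linf_const)
  note Ladd = bl_facts(1)[OF L] and Lsc = bl_facts(2)[OF L]
    and Lnorm = bl_facts(3)[OF L] and Lsh = bl_facts(4)[OF L]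
  have LscR: "L (\<lambda>n. r *\<^sub>R y n) = complex_of_real r * L y" if "y \<in> linf" for r y
    using Lsc[OF that, of "complex_of_real r"] by (simp add: cscale_real)
  have Lshk: "L (\<lambda>n. y (n + k)) = L y" if "y \<in> linf" for y k
  proof (induction k)
    case 0 then show ?case by simp
  next
    case (Suc k)
    have "L (\<lambda>n. y (n + Suc k)) = L (\<lambda>n. (\<lambda>m. y (m + k)) (Suc n))" by simp
    also have "\<dots> = L (\<lambda>m. y (m + k))" by (rule Lsh[OF linf_shift[OF that]])
    finally show ?case using Suc by simp
  qed
  have Lsum: "L (\<lambda>j. \<Sum>i<N. d (i + j)) = of_nat N * L d" for N
  proof (induction N)
    case 0
    have "L (\<lambda>j. \<Sum>i<0. d (i + j)) = L (\<lambda>j. 0 *\<^sub>R d j)" by simp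
    also have "\<dots> = 0" using LscR[OF dl, of 0] by simp
    finally show ?case by simp
  next
    case (Suc N)
    have l1: "(\<lambda>j. \<Sum>i<N. d (i + j)) \<in> linf"
      by (rule linf_sum) (rule linf_shift'[OF dl])
    have l2: "(\<lambda>j. d (N + j)) \<in> linf" by (rule linf_shift'[OF dl])
    have "L (\<lambda>j. \<Sum>i<Suc N. d (i + j)) = L (\<lambda>j. (\<Sum>i<N. d (i + j)) + d (N + j))" by simp
    also have "\<dots> = L (\<lambda>j. \<Sum>i<N. d (i + j)) + L (\<lambda>j. d (N + j))" by (rule Ladd[OF l1 l2])
    also have "L (\<lambda>j. d (N + j)) = L d" using Lshk[OF dl, of N] by (simp only: add.commute)
    finally show ?case using Suc by (simp add: algebra_simps)
  qed
  have bound: "cmod (L d) \<le> AA d N" if N: "N > 0" for N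
  proof -
    have l1: "(\<lambda>j. \<Sum>i<N. d (i + j)) \<in> linf"
      by (rule linf_sum) (rule linf_shift'[OF dl])
    have "L (avg d N) = L (\<lambda>j. (1 / real N) *\<^sub>R (\<Sum>i<N. d (i + j)))"
      by (simp add: avg_def[abs_def])
    also have "\<dots> = complex_of_real (1 / real N) * (of_nat N * L d)" by (simp add: LscR[OF l1] Lsum)
    also have "\<dots> = L d" using N by simp
    finally have e: "L (avg d N) = L d" .
    have al: "avg d N \<in> linf" using avg_linf_norm[OF dl] by (intro linfI) auto
    have "cmod (L d) \<le> linf_norm (avg d N)" using Lnorm[OF al] e by simp
    also have "linf_norm (avg d N) = AA d N" by (simp add: linf_norm_def AA_def)
    finally show ?thesis .
  qed
  have "cmod (L d) \<le> 0"
    by (rule LIMSEQ_le_const[OF a[folded d_def]]) (use bound in \<open>auto intro: exI[of _ 1]\<close>)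
  then have Ld: "L d = 0" by simp
  have "L x = L (\<lambda>n. d n + v)" by (simp add: d_def)
  also have "\<dots> = L d + L (\<lambda>_. v)" by (rule Ladd[OF dl linf_const])
  finally show ?thesis using Ld by simp
qed



lemma linf_apply: "apply_bcontfun b \<in> linf"
  unfolding linf_def by simp

lemma construct:
  fixes J :: "'a::real_normed_vector \<Rightarrow> 'a" and d :: "nat \<Rightarrow> 'a"
  assumes J: "complex_structure J" and dl: "d \<in> linf" and pos: "qq d > 0"
  shows "\<exists>L. banach_limit J L \<and> L d \<noteq> 0"
proof -
  define p where "p b = qq (apply_bcontfun b)" for b :: "nat \<Rightarrow>\<^sub>C 'a"
  have padd: "p (a + b) \<le> p a + p b" for a b
    unfolding p_def plus_bcontfun.rep_eq by (rule qq_add[OF linf_apply linf_apply])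
  have phom: "p (c *\<^sub>R a) = c * p a" if "c \<ge> 0" for c a
    unfolding p_def scaleR_bcontfun.rep_eq using qq_scaleR[OF linf_apply, of c a] that by simp
  obtain f where f: "linear f" and fle: "\<And>a. f a \<le> p a" and fz: "f (Bcontfun d) = p (Bcontfun d)"
    using hahn_banach_real[of p "Bcontfun d", OF padd phom] by blast
  have fle': "f (Bcontfun y) \<le> qq y" if "y \<in> linf" for y
    using fle[of "Bcontfun y"] unfolding p_def BC_inv[OF that] .
  have fd: "f (Bcontfun d) = qq d" using fz unfolding p_def BC_inv[OF dl] .
  define g where "g y = f (Bcontfun y)" for y :: "nat \<Rightarrow> 'a"
  have gadd: "g (\<lambda>n. x n + y n) = g x + g y" if "x \<in> linf" "y \<in> linf" for x y
    unfolding g_def BC_add[OF that] by (rule linear_add[OF f])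
  have gsc: "g (\<lambda>n. r *\<^sub>R y n) = r * g y" if "y \<in> linf" for r y
    unfolding g_def BC_scaleR[OF that] using linear_scale[OF f] by simp
  have gdiff: "g (\<lambda>n. x n - y n) = g x - g y" if "x \<in> linf" "y \<in> linf" for x y
    unfolding g_def BC_diff[OF that] by (rule linear_diff[OF f])
  have gsh: "g (\<lambda>n. y (Suc n)) = g y" if y: "y \<in> linf" for y
  proof -
    have ys: "(\<lambda>n. y (Suc n)) \<in> linf" using linf_shift[OF y, of 1] by simp
    have "g (\<lambda>n. y (Suc n)) - g y \<le> 0"
      using gdiff[OF ys y] fle'[OF linf_diff[OF ys y]] qq_shift[OF y] unfolding g_def by simp
    moreover have "g y - g (\<lambda>n. y (Suc n)) \<le> 0"
    proof -
      have my: "(\<lambda>n. - y n) \<in> linf" by (rule linf_uminus[OF y])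
      have "(\<lambda>n. y n - y (Suc n)) = (\<lambda>k. (\<lambda>n. - y n) (Suc k) - (\<lambda>n. - y n) k)" by simp
      then have "qq (\<lambda>n. y n - y (Suc n)) \<le> 0" using qq_shift[OF my] by simp
      then show ?thesis using gdiff[OF y ys] fle'[OF linf_diff[OF y ys]] unfolding g_def by simp
    qed
    ultimately show ?thesis by simp
  qed
  define L where "L y = complex_of_real (g y) - \<i> * complex_of_real (g (\<lambda>n. J (y n)))" for y
  have linJ: "linear J" using cs_facts(1)[OF J] .
  have ReL: "Re (L y) = g y" for y by (simp add: L_def)
  have Ladd: "L (\<lambda>n. x n + y n) = L x + L y" if "x \<in> linf" "y \<in> linf" for x y
  proof -
    have "(\<lambda>n. J (x n + y n)) = (\<lambda>n. J (x n) + J (y n))" by (simp add: linear_add[OF linJ])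
    then show ?thesis unfolding L_def
      using gadd[OF that] gadd[OF linf_J[OF J that(1)] linf_J[OF J that(2)]] by (simp add: algebra_simps)
  qed
  have Lsc: "L (\<lambda>n. cscale J c (y n)) = c * L y" if y: "y \<in> linf" for c y
  proof -
    have Jy: "(\<lambda>n. J (y n)) \<in> linf" by (rule linf_J[OF J y])
    have e1: "(\<lambda>n. cscale J c (y n)) = (\<lambda>n. Re c *\<^sub>R y n + Im c *\<^sub>R J (y n))"
      by (simp add: cscale_def)
    have e2: "(\<lambda>n. J (cscale J c (y n))) = (\<lambda>n. Re c *\<^sub>R J (y n) - Im c *\<^sub>R y n)"
      by (simp add: cscale_def linear_add[OF linJ] linear_scale[OF linJ] cs_facts(2)[OF J])
    have g1: "g (\<lambda>n. cscale J c (y n)) = Re c * g y + Im c * g (\<lambda>n. J (y n))"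
      unfolding e1 by (simp add: gadd[OF linf_scaleR[OF y] linf_scaleR[OF Jy]] gsc[OF y] gsc[OF Jy])
    have g2: "g (\<lambda>n. J (cscale J c (y n))) = Re c * g (\<lambda>n. J (y n)) - Im c * g y"
      unfolding e2 by (simp add: gdiff[OF linf_scaleR[OF Jy] linf_scaleR[OF y]] gsc[OF y] gsc[OF Jy])
    show ?thesis unfolding L_def g1 g2
      by (simp add: complex_eq_iff algebra_simps)
  qed
  have Lnorm: "cmod (L y) \<le> linf_norm y" if y: "y \<in> linf" for y
  proof (cases "L y = 0")
    case True then show ?thesis using linf_norm_nonneg[OF y] by simp
  next
    case False
    define e where "e = cnj (L y) / complex_of_real (cmod (L y))"
    have ce: "cmod e = 1" using False by (simp add: e_def norm_divide)
    have sq: "L y * cnj (L y) = complex_of_real (cmod (L y)) * complex_of_real (cmod (L y))"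
      using complex_norm_square[of "L y"] by (simp add: power2_eq_square)
    have "e * L y = complex_of_real (cmod (L y))"
      using False unfolding e_def by (simp add: field_simps sq)
    then have "L (\<lambda>n. cscale J e (y n)) = complex_of_real (cmod (L y))" using Lsc[OF y] by simp
    then have "cmod (L y) = g (\<lambda>n. cscale J e (y n))" using ReL by (metis Re_complex_of_real)
    also have "\<dots> \<le> qq (\<lambda>n. cscale J e (y n))" unfolding g_def by (rule fle'[OF linf_cscale[OF J y]])
    also have "\<dots> = qq y" using qq_cscale[OF J y] ce by simp
    also have "\<dots> \<le> linf_norm y" using qq_props(3)[OF y] .
    finally show ?thesis .
  qed
  have Lsh: "L (\<lambda>n. y (Suc n)) = L y" if y: "y \<in> linf" for y
    unfolding L_def using gsh[OF y] gsh[OF linf_J[OF J y]] by simp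
  have "banach_limit J L"
    unfolding banach_limit_def using Ladd Lsc Lnorm Lsh by blast
  moreover have "L d \<noteq> 0"
  proof
    assume "L d = 0"
    then have "g d = 0" using ReL[of d] by simp
    then show False using fd pos unfolding g_def by simp
  qed
  ultimately show ?thesis by blast
qed



theorem mainTheorem14:
  fixes J :: "'a::real_normed_vector \<Rightarrow> 'a" and x :: "nat \<Rightarrow> 'a" and v :: 'a
  assumes "complex_structure J"
    and "x \<in> linf"
  shows "strongly_almost_convergent J x v \<longleftrightarrow>
    uniform_limit UNIV (\<lambda>n j. (1 / real n) *\<^sub>R (\<Sum>i<n. x (i + j))) (\<lambda>j. v) sequentially"
proof -
  note J = assms(1) and xl = assms(2)
  define d where "d = (\<lambda>k. x k - v)"
  have dl: "d \<in> linf" unfolding d_def by (intro linf_diff xl linf_const)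
  have eq: "(\<lambda>n j. (1 / real n) *\<^sub>R (\<Sum>i<n. x (i + j))) = (\<lambda>n j. avg x n j)"
    by (simp add: avg_def)
  have U: "uniform_limit UNIV (\<lambda>n j. (1 / real n) *\<^sub>R (\<Sum>i<n. x (i + j))) (\<lambda>j. v) sequentially
      \<longleftrightarrow> (\<lambda>n. AA d n) \<longlonglongrightarrow> 0"
    unfolding eq d_def by (rule unif_iff_AA[OF xl])
  show ?thesis unfolding U
  proof
    assume sac: "strongly_almost_convergent J x v"
    show "(\<lambda>n. AA d n) \<longlonglongrightarrow> 0"
    proof (rule qq_zero[OF dl], rule ccontr)
      assume "\<not> qq d \<le> 0"
      then have "qq d > 0" by simp
      then obtain L where L: "banach_limit J L" and Ld: "L d \<noteq> 0"
        using construct[OF J dl] by blast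
      have "L x = L (\<lambda>_. v)" using sac L unfolding strongly_almost_convergent_def by blast
      moreover have "L x = L (\<lambda>n. d n + v)" by (simp add: d_def)
      moreover have "L (\<lambda>n. d n + v) = L d + L (\<lambda>_. v)" by (rule bl_facts(1)[OF L dl linf_const])
      ultimately show False using Ld by simp
    qed
  next
    assume a: "(\<lambda>n. AA d n) \<longlonglongrightarrow> 0"
    show "strongly_almost_convergent J x v"
      unfolding strongly_almost_convergent_def
      using dir_easy[OF J xl _ a[unfolded d_def]] by blast
  qed
qed


end
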